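(* Let $p\in(0,1)$ and, for each integer $n\ge 1$, let $X_n$ be the maximum weight of a directed path from vertex $1$ to vertex $n$ in the transitive tournament on $\{1,\ldots,n\}$ whose edges carry independent $\mathrm{Bernoulli}(p)$ weights. Put $g(0)=1$ and $g(n)=1+\mathbb{E}[X_n]$ for $n\ge1$, and let $G_p(x)=\sum_{n\ge0}g(n)x^n$. Then, as formal power series in $x$, \[ G_p(x)=1+\frac{x}{(1-x)^2B_p(x)}, \qquad\text{where } B_p(x)=\sum_{n\ge0}(1-p)^{\binom{n+1}{2}}x^n. \]
   Context: The transitive tournament on $\{1,\ldots,n\}$ is the directed graph with vertex set $\{1,\ldots,n\}$ and a directed edge $(i,j)$ for every $1\le i<j\le n$. Each edge $(i,j)$ is given a weight $w(i,j)\in\{0,1\}$. These weights are independent, and each equals $1$ with probability $p$ and $0$ with probability $1-p$. The weight of a directed path is the sum of the weights of its edges. $X_n$ is the maximum weight over all directed paths from $1$ to $n$; the one-vertex path has weight $0$, so $X_1=0$. Binomial coefficients satisfy $\binom{0}{2}=\binom{1}{2}=0$. Because $B_p(x)$ has constant term $1$, it is invertible as a formal power series. *)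

theory Defs
  imports "HOL-Probability.Probability" "HOL-Computational_Algebra.Formal_Power_Series"
begin

definition tt_edges :: "nat \<Rightarrow> (nat \<times> nat) set" where
  "tt_edges n = {(i, j). 1 \<le> i \<and> i < j \<and> j \<le> n}"

definition tt_paths :: "nat \<Rightarrow> nat list set" where
  "tt_paths n = {vs. vs \<noteq> [] \<and> sorted_wrt (<) vs \<and> hd vs = 1 \<and> last vs = n}"

definition path_weight :: "((nat \<times> nat) \<Rightarrow> bool) \<Rightarrow> nat list \<Rightarrow> real" where
  "path_weight w vs = sum_list (map (\<lambda>e. of_bool (w e)) (zip vs (tl vs)))"

definition max_path_weight :: "nat \<Rightarrow> ((nat \<times> nat) \<Rightarrow> bool) \<Rightarrow> real" where
  "max_path_weight n w = Max (path_weight w ` tt_paths n)"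

definition weight_distr :: "real \<Rightarrow> nat \<Rightarrow> ((nat \<times> nat) \<Rightarrow> bool) pmf" where
  "weight_distr p n = Pi_pmf (tt_edges n) False (\<lambda>_. bernoulli_pmf p)"

definition exp_X :: "real \<Rightarrow> nat \<Rightarrow> real" where
  "exp_X p n = measure_pmf.expectation (weight_distr p n) (max_path_weight n)"

definition g_seq :: "real \<Rightarrow> nat \<Rightarrow> real" where
  "g_seq p n = (if n = 0 then 1 else 1 + exp_X p n)"

definition G_fps :: "real \<Rightarrow> real fps" where
  "G_fps p = Abs_fps (g_seq p)"

definition B_fps :: "real \<Rightarrow> real fps" where
  "B_fps p = Abs_fps (\<lambda>n. (1 - p) ^ (Suc n choose 2))"

end

theory Submission
  imports Defs
begin


lemma sw_last: "sorted_wrt (<) (xs @ [l]) \<Longrightarrow> y \<in> set xs \<Longrightarrow> y < (l::nat)"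
  by (simp add: sorted_wrt_append)

lemma zip_tl_snoc: "vs \<noteq> [] \<Longrightarrow> zip (vs @ [j]) (tl (vs @ [j])) = zip vs (tl vs) @ [(last vs, j)]"
  by (induction vs rule: induct_list012) auto

lemma pw_snoc: "vs \<noteq> [] \<Longrightarrow> path_weight w (vs @ [j]) = path_weight w vs + of_bool (w (last vs, j))"
proof -
  assume ne: "vs \<noteq> []"
  have z: "zip (vs @ [j]) (tl (vs @ [j])) = zip vs (tl vs) @ [(last vs, j)]" by (rule zip_tl_snoc[OF ne])
  show ?thesis unfolding path_weight_def z by simp
qed

lemma zip_tl_edges: "sorted_wrt (<) vs \<Longrightarrow> (a,b) \<in> set (zip vs (tl vs)) \<Longrightarrow> a < b \<and> a \<in> set vs \<and> b \<in> set vs"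
  by (induction vs rule: induct_list012) auto

lemma tt_paths_bounds: "vs \<in> tt_paths n \<Longrightarrow> set vs \<subseteq> {1..n}"
proof
  fix x assume vs: "vs \<in> tt_paths n" and x: "x \<in> set vs"
  then have ne: "vs \<noteq> []" and s: "sorted_wrt (<) vs" and h: "hd vs = 1" and l: "last vs = n"
    by (auto simp: tt_paths_def)
  obtain a rest where a: "vs = a # rest" using ne by (cases vs) auto
  have "1 \<le> x" using s x h a by auto
  moreover have "x \<le> n"
  proof -
    have "vs = butlast vs @ [last vs]" using ne by simp
    then have "sorted_wrt (<) (butlast vs @ [n])" using s l by metis
    moreover have "x \<in> set (butlast vs) \<or> x = last vs" using x ne
      by (metis \<open>vs = butlast vs @ [last vs]\<close> rotate1.simps(2) set_ConsD set_rotate1)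
    ultimately show ?thesis using l sw_last by fastforce
  qed
  ultimately show "x \<in> {1..n}" by auto
qed

lemma finite_tt_paths: "finite (tt_paths n)"
proof -
  have "tt_paths n \<subseteq> {xs. set xs \<subseteq> {1..n} \<and> length xs \<le> n}"
  proof
    fix vs assume vs: "vs \<in> tt_paths n"
    then have "set vs \<subseteq> {1..n}" by (rule tt_paths_bounds)
    moreover have "distinct vs" using vs by (auto simp: tt_paths_def strict_sorted_iff)
    have "length vs = card (set vs)" using distinct_card[OF \<open>distinct vs\<close>] by simp
    also have "\<dots> \<le> card {1..n}" using \<open>set vs \<subseteq> {1..n}\<close> by (intro card_mono) auto
    finally have "length vs \<le> n" by simp
    then show "vs \<in> {xs. set xs \<subseteq> {1..n} \<and> length xs \<le> n}" using \<open>set vs \<subseteq> _\<close> by auto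
  qed
  then show ?thesis using finite_lists_length_le[of "{1..n}" n] finite_subset by blast
qed

lemma tt_paths_1: "tt_paths 1 = {[1]}"
proof
  show "tt_paths 1 \<subseteq> {[1]}"
  proof
    fix vs assume vs: "vs \<in> tt_paths 1"
    then have "set vs \<subseteq> {1}" using tt_paths_bounds by fastforce
    moreover have "distinct vs" "vs \<noteq> []" using vs by (auto simp: tt_paths_def strict_sorted_iff)
    moreover obtain a rest where ar: "vs = a # rest" using \<open>vs \<noteq> []\<close> by (cases vs) auto
    ultimately have "a = 1" "set rest \<subseteq> {1}" "1 \<notin> set rest" by auto
    then have "rest = []" by (cases rest) auto
    then have "vs = [1]" using ar \<open>a = 1\<close> by simp
    then show "vs \<in> {[1]}" by simp
  qed
qed (simp add: tt_paths_def)

lemma snoc_path: "vs \<in> tt_paths i \<Longrightarrow> i < j \<Longrightarrow> vs @ [j] \<in> tt_paths j"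
proof -
  assume vs: "vs \<in> tt_paths i" and ij: "i < j"
  have ne: "vs \<noteq> []" and s: "sorted_wrt (<) vs" and h: "hd vs = 1"
    using vs by (auto simp: tt_paths_def)
  have lt: "\<forall>x\<in>set vs. x < j" using tt_paths_bounds[OF vs] ij by fastforce
  have "sorted_wrt (<) (vs @ [j])" using s lt by (simp add: sorted_wrt_append)
  moreover have "hd (vs @ [j]) = 1" using ne h by simp
  ultimately show ?thesis by (simp add: tt_paths_def)
qed

lemma path_decomp:
  assumes vs: "vs \<in> tt_paths j" and j: "2 \<le> j"
  shows "\<exists>vs0. vs = vs0 @ [j] \<and> vs0 \<in> tt_paths (last vs0) \<and> 1 \<le> last vs0 \<and> last vs0 < j"
proof -
  have ne: "vs \<noteq> []" and s: "sorted_wrt (<) vs" and h: "hd vs = 1" and l: "last vs = j"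
    using vs by (auto simp: tt_paths_def)
  define vs0 where "vs0 = butlast vs"
  have eq: "vs = vs0 @ [j]" unfolding vs0_def using append_butlast_last_id[OF ne] l by simp
  have ne0: "vs0 \<noteq> []" using eq h j by (cases vs0) auto
  have "hd vs0 = 1" using eq h ne0 by (cases vs0) auto
  moreover have s0: "sorted_wrt (<) (vs0 @ [j])" using s eq by simp
  moreover have "sorted_wrt (<) vs0" using s0 by (simp add: sorted_wrt_append)
  moreover have "last vs0 < j" using sw_last[OF s0, of "last vs0"] ne0 by simp
  moreover have "1 \<le> last vs0"
  proof -
    have "last vs0 \<in> set vs" using eq ne0 by simp
    then show ?thesis using tt_paths_bounds[OF vs] by auto
  qed
  ultimately show ?thesis using eq ne0 by (auto simp: tt_paths_def)
qed

lemma pw_Nats: "path_weight w vs \<in> \<nat>"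
proof -
  have "\<And>xs. sum_list (map (\<lambda>e. of_bool (w e)) xs) \<in> (\<nat> :: real set)"
  proof -
    fix xs :: "(nat \<times> nat) list" show "sum_list (map (\<lambda>e. of_bool (w e)) xs) \<in> (\<nat> :: real set)"
    proof (induction xs)
      case (Cons a xs)
      then show ?case by (simp add: Nats_add)
    qed simp
  qed
  then show ?thesis unfolding path_weight_def by blast
qed

definition F :: "nat \<Rightarrow> ((nat \<times> nat) \<Rightarrow> bool) \<Rightarrow> real" where
  "F j w = max_path_weight j w"

lemma tt_paths_ne: "1 \<le> j \<Longrightarrow> tt_paths j \<noteq> {}"
proof -
  assume "1 \<le> j"
  then show ?thesis
  proof (cases "j = 1")
    case True
    then have "[1] \<in> tt_paths j" by (simp add: tt_paths_def)
    then show ?thesis by blast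
  next
    case False
    then have "[1] @ [j] \<in> tt_paths j" using \<open>1 \<le> j\<close> by (intro snoc_path) (auto simp: tt_paths_def)
    then show ?thesis by blast
  qed
qed

lemma F_opt: "1 \<le> j \<Longrightarrow> \<exists>vs \<in> tt_paths j. F j w = path_weight w vs"
  unfolding F_def max_path_weight_def
  using Max_in[of "path_weight w ` tt_paths j"] finite_tt_paths tt_paths_ne by fastforce

lemma F_ge: "vs \<in> tt_paths j \<Longrightarrow> path_weight w vs \<le> F j w"
  unfolding F_def max_path_weight_def
  using finite_tt_paths by (intro Max_ge) auto

lemma F_Nats: "1 \<le> j \<Longrightarrow> F j w \<in> \<nat>"
proof -
  assume "1 \<le> j"
  then obtain vs where "F j w = path_weight w vs" using F_opt by blast
  then show ?thesis using pw_Nats by simp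
qed

lemma F_1: "F 1 w = 0"
  unfolding F_def max_path_weight_def tt_paths_1 by (simp add: path_weight_def)

lemma F_step_ge: "1 \<le> i \<Longrightarrow> i < j \<Longrightarrow> F i w + of_bool (w (i, j)) \<le> F j w"
proof -
  assume i: "1 \<le> i" "i < j"
  obtain vs where vs: "vs \<in> tt_paths i" "F i w = path_weight w vs" using F_opt[OF i(1)] by blast
  have ne: "vs \<noteq> []" and l: "last vs = i" using vs(1) by (auto simp: tt_paths_def)
  have pw: "path_weight w (vs @ [j]) = path_weight w vs + of_bool (w (last vs, j))" by (rule pw_snoc[OF ne])
  have mem: "vs @ [j] \<in> tt_paths j" by (rule snoc_path[OF vs(1) i(2)])
  have "path_weight w (vs @ [j]) \<le> F j w" by (rule F_ge[OF mem])
  then show ?thesis using pw vs(2) l by simp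
qed

lemma F_mono: "1 \<le> i \<Longrightarrow> i \<le> j \<Longrightarrow> F i w \<le> F j w"
proof (cases "i = j")
  case False
  assume "1 \<le> i" "i \<le> j"
  then have "F i w + of_bool (w (i, j)) \<le> F j w" using False F_step_ge by simp
  moreover have "(0::real) \<le> of_bool (w (i, j))" by simp
  ultimately show ?thesis by linarith
qed simp

lemma F_step_eq: "2 \<le> j \<Longrightarrow> \<exists>i. 1 \<le> i \<and> i < j \<and> F j w = F i w + of_bool (w (i, j))"
proof -
  assume j: "2 \<le> j"
  have "1 \<le> j" using j by simp
  then obtain vs where vs: "vs \<in> tt_paths j" "F j w = path_weight w vs" using F_opt by blast
  obtain vs0 where v0: "vs = vs0 @ [j]" "vs0 \<in> tt_paths (last vs0)" "1 \<le> last vs0" "last vs0 < j"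
    using path_decomp[OF vs(1) j] by blast
  have "vs0 \<noteq> []" using v0 by (auto simp: tt_paths_def)
  then have "F j w = path_weight w vs0 + of_bool (w (last vs0, j))" using vs(2) v0(1) pw_snoc by simp
  also have "\<dots> \<le> F (last vs0) w + of_bool (w (last vs0, j))" using F_ge[OF v0(2), of w] by simp
  finally have "F j w \<le> F (last vs0) w + of_bool (w (last vs0, j))" .
  moreover have "F (last vs0) w + of_bool (w (last vs0, j)) \<le> F j w" using F_step_ge v0 by blast
  ultimately show ?thesis using v0 by (intro exI[of _ "last vs0"]) auto
qed

lemma F_local: "(\<And>e. e \<in> tt_edges j \<Longrightarrow> w e = w' e) \<Longrightarrow> F j w = F j w'"
proof -
  assume agree: "\<And>e. e \<in> tt_edges j \<Longrightarrow> w e = w' e"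
  have "path_weight w vs = path_weight w' vs" if vs: "vs \<in> tt_paths j" for vs
  proof -
    have "\<And>e. e \<in> set (zip vs (tl vs)) \<Longrightarrow> w e = w' e"
    proof -
      fix e assume e: "e \<in> set (zip vs (tl vs))"
      obtain a b where ab: "e = (a,b)" by fastforce
      have s: "sorted_wrt (<) vs" using vs by (simp add: tt_paths_def)
      have "a < b" "a \<in> set vs" "b \<in> set vs" using zip_tl_edges[OF s] e ab by auto
      then have "e \<in> tt_edges j" using tt_paths_bounds[OF vs] ab by (auto simp: tt_edges_def)
      then show "w e = w' e" by (rule agree)
    qed
    then have "map (\<lambda>e. of_bool (w e)) (zip vs (tl vs)) = map (\<lambda>e. of_bool (w' e)) (zip vs (tl vs))"
      by (intro map_cong) auto
    then show ?thesis unfolding path_weight_def by (rule arg_cong)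
  qed
  then have "path_weight w ` tt_paths j = path_weight w' ` tt_paths j" by (auto intro: image_cong)
  then show ?thesis by (simp add: F_def max_path_weight_def)
qed



lemma nats_lt: "(x::real) \<in> \<nat> \<Longrightarrow> y \<in> \<nat> \<Longrightarrow> x < y \<Longrightarrow> x + 1 \<le> y"
proof -
  assume "x \<in> \<nat>" "y \<in> \<nat>" "x < y"
  then obtain a b :: nat where "x = of_nat a" "y = of_nat b" by (auto elim!: Nats_cases)
  then show ?thesis using \<open>x < y\<close> by simp
qed

definition Lset :: "nat \<Rightarrow> ((nat \<times> nat) \<Rightarrow> bool) \<Rightarrow> nat set" where
  "Lset n w = {i \<in> {1..n}. F i w = F n w}"

definition R :: "nat \<Rightarrow> ((nat \<times> nat) \<Rightarrow> bool) \<Rightarrow> nat" where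
  "R n w = card (Lset n w)"

definition bnew :: "nat \<Rightarrow> ((nat \<times> nat) \<Rightarrow> bool) \<Rightarrow> bool" where
  "bnew n w = (\<exists>i\<in>Lset n w. w (i, Suc n))"

lemma Lset_sub: "Lset n w \<subseteq> {1..n}"
  by (auto simp: Lset_def)

lemma F_Suc:
  assumes n: "1 \<le> n"
  shows "F (Suc n) w = F n w + of_bool (bnew n w)"
proof -
  obtain i' where i': "1 \<le> i'" "i' < Suc n" "F (Suc n) w = F i' w + of_bool (w (i', Suc n))"
    using F_step_eq[of "Suc n" w] n by auto
  have mono': "F i' w \<le> F n w" using F_mono[of i' n w] i' by simp
  show ?thesis
  proof (cases "bnew n w")
    case True
    then obtain i where i: "i \<in> Lset n w" "w (i, Suc n)" by (auto simp: bnew_def)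
    then have "1 \<le> i" "i < Suc n" "F i w = F n w" by (auto simp: Lset_def)
    then have "F n w + 1 \<le> F (Suc n) w" using F_step_ge[of i "Suc n" w] i(2) by simp
    moreover have "F (Suc n) w \<le> F n w + 1" using i'(3) mono' by simp
    ultimately show ?thesis using True by simp
  next
    case False
    have ge: "F n w \<le> F (Suc n) w" using F_mono[of n "Suc n" w] n by simp
    have "F (Suc n) w \<le> F n w"
    proof (cases "w (i', Suc n)")
      case True
      then have "i' \<notin> Lset n w" using False by (auto simp: bnew_def)
      then have "F i' w \<noteq> F n w" using i' by (auto simp: Lset_def)
      then have "F i' w < F n w" using mono' by simp
      then have "F i' w + 1 \<le> F n w" using nats_lt F_Nats i'(1) n by blast
      then show ?thesis using i'(3) True by simp
    next
      case False
      then show ?thesis using i'(3) mono' by simp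
    qed
    then show ?thesis using ge False by simp
  qed
qed

lemma Lset_Suc:
  assumes n: "1 \<le> n"
  shows "Lset (Suc n) w = (if bnew n w then {Suc n} else insert (Suc n) (Lset n w))"
proof (cases "bnew n w")
  case True
  then have FS: "F (Suc n) w = F n w + 1" using F_Suc[OF n] by simp
  have "i \<notin> Lset (Suc n) w" if "i \<noteq> Suc n" for i
  proof
    assume "i \<in> Lset (Suc n) w"
    then have "1 \<le> i" "i \<le> n" "F i w = F (Suc n) w" using that by (auto simp: Lset_def)
    then show False using F_mono[of i n w] FS by simp
  qed
  moreover have "Suc n \<in> Lset (Suc n) w" by (simp add: Lset_def)
  ultimately show ?thesis using True by auto
next
  case False
  then have FS: "F (Suc n) w = F n w" using F_Suc[OF n] by simp
  show ?thesis using False FS by (auto simp: Lset_def le_Suc_eq)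
qed

lemma finite_Lset: "finite (Lset n w)"
  using Lset_sub finite_subset by blast

lemma R_Suc:
  assumes n: "1 \<le> n"
  shows "R (Suc n) w = (if bnew n w then 1 else Suc (R n w))"
proof -
  have "Suc n \<notin> Lset n w" using Lset_sub by fastforce
  then show ?thesis unfolding R_def Lset_Suc[OF n] using finite_Lset by simp
qed

lemma R_range:
  assumes n: "1 \<le> n"
  shows "R n w \<in> {1..n}"
proof -
  have "n \<in> Lset n w" using n by (simp add: Lset_def)
  then have "1 \<le> R n w" unfolding R_def using finite_Lset
    by (metis One_nat_def Suc_leI card_gt_0_iff empty_iff)
  moreover have "R n w \<le> n" unfolding R_def using card_mono[OF _ Lset_sub, of n w] by simp
  ultimately show ?thesis by simp
qed

lemma Lset_local:
  assumes "\<And>e. e \<in> tt_edges n \<Longrightarrow> w e = w' e"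
  shows "Lset n w = Lset n w'"
proof -
  have "F i w = F i w'" if "i \<le> n" for i
    using that assms by (intro F_local) (auto simp: tt_edges_def)
  then show ?thesis by (auto simp: Lset_def)
qed



lemma finite_tt_edges: "finite (tt_edges n)"
proof -
  have "tt_edges n \<subseteq> {1..n} \<times> {1..n}" by (auto simp: tt_edges_def)
  then show ?thesis using finite_subset by blast
qed

lemma finite_set_Pi_bern: "finite A \<Longrightarrow> finite (set_pmf (Pi_pmf A False (\<lambda>_. bernoulli_pmf p)))"
  by (subst set_Pi_pmf) (auto intro!: finite_PiE_dflt intro: finite_subset[OF subset_UNIV])

lemma exp_pair:
  fixes h :: "'a \<times> 'b \<Rightarrow> real"
  assumes fa: "finite (set_pmf A)" and fb: "finite (set_pmf B)"
  shows "measure_pmf.expectation (pair_pmf A B) h =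
         measure_pmf.expectation A (\<lambda>a. measure_pmf.expectation B (\<lambda>b. h (a, b)))"
proof -
  have "measure_pmf.expectation (pair_pmf A B) h = (\<Sum>x\<in>set_pmf A \<times> set_pmf B. h x * pmf (pair_pmf A B) x)"
    by (rule integral_measure_pmf_real) (use fa fb in auto)
  also have "\<dots> = (\<Sum>a\<in>set_pmf A. \<Sum>b\<in>set_pmf B. h (a, b) * (pmf A a * pmf B b))"
    unfolding sum.cartesian_product by (intro sum.cong refl) (auto simp: pmf_pair)
  also have "\<dots> = (\<Sum>a\<in>set_pmf A. (\<Sum>b\<in>set_pmf B. h (a, b) * pmf B b) * pmf A a)"
    by (intro sum.cong refl) (simp add: sum_distrib_left sum_distrib_right mult_ac)
  also have "\<dots> = (\<Sum>a\<in>set_pmf A. measure_pmf.expectation B (\<lambda>b. h (a, b)) * pmf A a)"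
    by (intro sum.cong refl arg_cong2[where f="(*)"] integral_measure_pmf_real[symmetric]) (use fb in auto)
  also have "\<dots> = measure_pmf.expectation A (\<lambda>a. measure_pmf.expectation B (\<lambda>b. h (a, b)))"
    by (rule integral_measure_pmf_real[symmetric]) (use fa in auto)
  finally show ?thesis .
qed

definition Nw :: "nat \<Rightarrow> (nat \<times> nat) set" where
  "Nw n = (\<lambda>i. (i, Suc n)) ` {1..n}"

lemma tt_edges_Suc: "tt_edges (Suc n) = tt_edges n \<union> Nw n"
  by (auto simp: tt_edges_def Nw_def le_Suc_eq)

lemma tt_edges_Nw_disj: "tt_edges n \<inter> Nw n = {}"
  by (auto simp: tt_edges_def Nw_def)

lemma inner_exp:
  fixes \<Psi> :: "bool \<Rightarrow> real"
  assumes L: "L \<subseteq> {1..n}" and p: "0 \<le> p" "p \<le> 1"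
  shows "measure_pmf.expectation (Pi_pmf (Nw n) False (\<lambda>_. bernoulli_pmf p)) (\<lambda>g. \<Psi> (\<exists>i\<in>L. g (i, Suc n)))
         = (1 - (1 - p) ^ card L) * \<Psi> True + (1 - p) ^ card L * \<Psi> False"
proof -
  define M where "M = Pi_pmf (Nw n) False (\<lambda>_. bernoulli_pmf p)"
  define L' where "L' = (\<lambda>i. (i, Suc n)) ` L"
  have fN: "finite (Nw n)" by (simp add: Nw_def)
  have fM: "finite (set_pmf M)" unfolding M_def by (rule finite_set_Pi_bern[OF fN])
  have L'N: "L' \<subseteq> Nw n" using L by (auto simp: L'_def Nw_def)
  have cardL': "card L' = card L" unfolding L'_def by (rule card_image) (auto simp: inj_on_def)
  define c where "c = (\<lambda>g::(nat \<times> nat) \<Rightarrow> bool. \<Prod>x\<in>Nw n. (if x \<in> L' then of_bool (\<not> g x) else (1::real)))"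
  have c_eq: "c g = of_bool (\<not> (\<exists>i\<in>L. g (i, Suc n)))" for g
  proof -
    have "c g = (\<Prod>x\<in>Nw n \<inter> L'. of_bool (\<not> g x))"
      unfolding c_def using fN by (simp add: prod.inter_restrict)
    also have "Nw n \<inter> L' = L'" using L'N by blast
    also have "(\<Prod>x\<in>L'. of_bool (\<not> g x) :: real) = of_bool (\<forall>x\<in>L'. \<not> g x)"
      using L'N fN finite_subset by (induction L' rule: infinite_finite_induct) auto
    finally show ?thesis by (simp add: L'_def)
  qed
  have Ec: "measure_pmf.expectation M c = (1 - p) ^ card L"
  proof -
    have "measure_pmf.expectation M c =
          (\<Prod>x\<in>Nw n. measure_pmf.expectation (bernoulli_pmf p) (\<lambda>v. if x \<in> L' then of_bool (\<not> v) else (1::real)))"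
      unfolding M_def c_def
      by (rule expectation_prod_Pi_pmf[OF fN]) (auto intro: integrable_measure_pmf_finite)
    also have "\<dots> = (\<Prod>x\<in>Nw n. if x \<in> L' then 1 - p else 1)"
      using p by (intro prod.cong refl) auto
    also have "\<dots> = (\<Prod>x\<in>Nw n \<inter> L'. 1 - p)"
      using prod.inter_restrict[OF fN, of "\<lambda>_. 1 - p" L'] by simp
    also have "Nw n \<inter> L' = L'" using L'N by blast
    finally show ?thesis by (simp add: cardL')
  qed
  have eq: "\<Psi> (\<exists>i\<in>L. g (i, Suc n)) = \<Psi> True + (\<Psi> False - \<Psi> True) * c g" for g
    by (simp add: c_eq)
  have "measure_pmf.expectation M (\<lambda>g. \<Psi> (\<exists>i\<in>L. g (i, Suc n))) =
        measure_pmf.expectation M (\<lambda>g. \<Psi> True + (\<Psi> False - \<Psi> True) * c g)"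
    by (simp only: eq)
  also have "\<dots> = \<Psi> True + (\<Psi> False - \<Psi> True) * measure_pmf.expectation M c"
    using fM by (simp add: integrable_measure_pmf_finite)
  also have "\<dots> = (1 - (1 - p) ^ card L) * \<Psi> True + (1 - p) ^ card L * \<Psi> False"
    by (simp add: Ec algebra_simps)
  finally show ?thesis unfolding M_def .
qed



lemma finite_set_D: "finite (set_pmf (weight_distr p n))"
  unfolding weight_distr_def by (rule finite_set_Pi_bern[OF finite_tt_edges])

lemma exp_const: "measure_pmf.expectation M (\<lambda>_. c::real) = c"
  by simp

lemma step:
  fixes \<Phi> :: "real \<Rightarrow> nat \<Rightarrow> bool \<Rightarrow> real"
  assumes n: "1 \<le> n" and p: "0 \<le> p" "p \<le> 1"
  shows "measure_pmf.expectation (weight_distr p (Suc n)) (\<lambda>w. \<Phi> (F n w) (R n w) (bnew n w)) =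
         measure_pmf.expectation (weight_distr p n)
           (\<lambda>w. (1 - (1 - p) ^ R n w) * \<Phi> (F n w) (R n w) True + (1 - p) ^ R n w * \<Phi> (F n w) (R n w) False)"
proof -
  define B where "B = Pi_pmf (Nw n) False (\<lambda>_. bernoulli_pmf p)"
  define mg :: "((nat \<times> nat \<Rightarrow> bool) \<times> (nat \<times> nat \<Rightarrow> bool)) \<Rightarrow> (nat \<times> nat \<Rightarrow> bool)"
    where "mg = (\<lambda>(f,g) x. if x \<in> tt_edges n then f x else g x)"
  have fN: "finite (Nw n)" by (simp add: Nw_def)
  have fB: "finite (set_pmf B)" unfolding B_def by (rule finite_set_Pi_bern[OF fN])
  have D: "weight_distr p (Suc n) = map_pmf mg (pair_pmf (weight_distr p n) B)"
    unfolding weight_distr_def tt_edges_Suc mg_def B_def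
    by (rule Pi_pmf_union) (simp_all add: finite_tt_edges fN tt_edges_Nw_disj)
  have agree: "\<And>e. e \<in> tt_edges n \<Longrightarrow> mg (f, g) e = f e" for f g by (simp add: mg_def)
  have locF: "F n (mg (f, g)) = F n f" for f g by (rule F_local[OF agree])
  have locL: "Lset n (mg (f, g)) = Lset n f" for f g by (rule Lset_local[OF agree])
  have locB: "bnew n (mg (f, g)) = (\<exists>i\<in>Lset n f. g (i, Suc n))" for f g
    unfolding bnew_def locL by (auto simp: mg_def tt_edges_def)
  have "measure_pmf.expectation (weight_distr p (Suc n)) (\<lambda>w. \<Phi> (F n w) (R n w) (bnew n w)) =
        measure_pmf.expectation (pair_pmf (weight_distr p n) B)
          (\<lambda>x. \<Phi> (F n (fst x)) (card (Lset n (fst x))) (\<exists>i\<in>Lset n (fst x). snd x (i, Suc n)))"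
    unfolding D integral_map_pmf
    by (intro Bochner_Integration.integral_cong refl) (auto simp: R_def locF locL locB)
  also have "\<dots> = measure_pmf.expectation (weight_distr p n) (\<lambda>f. measure_pmf.expectation B
          (\<lambda>g. \<Phi> (F n f) (card (Lset n f)) (\<exists>i\<in>Lset n f. g (i, Suc n))))"
    using exp_pair[OF finite_set_D fB, where h = "\<lambda>x. \<Phi> (F n (fst x)) (card (Lset n (fst x))) (\<exists>i\<in>Lset n (fst x). snd x (i, Suc n))"]
    by simp
  also have "\<dots> = measure_pmf.expectation (weight_distr p n)
           (\<lambda>w. (1 - (1 - p) ^ R n w) * \<Phi> (F n w) (R n w) True + (1 - p) ^ R n w * \<Phi> (F n w) (R n w) False)"
    unfolding B_def R_def
    by (intro Bochner_Integration.integral_cong refl inner_exp[OF Lset_sub p])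
  finally show ?thesis .
qed



definition hh :: "real \<Rightarrow> nat \<Rightarrow> nat \<Rightarrow> real" where
  "hh p n k = measure_pmf.expectation (weight_distr p n) (\<lambda>w. of_bool (R n w = k))"

lemma int_D: "integrable (measure_pmf (weight_distr p n)) f"
  for f :: "_ \<Rightarrow> real"
  by (rule integrable_measure_pmf_finite[OF finite_set_D])

lemma F_eq: "F = max_path_weight"
  by (intro ext) (simp add: F_def)

lemma E_Suc:
  assumes n: "1 \<le> n" and p: "0 \<le> p" "p \<le> 1"
  shows "exp_X p (Suc n) = exp_X p n + measure_pmf.expectation (weight_distr p n) (\<lambda>w. 1 - (1 - p) ^ R n w)"
proof -
  have "exp_X p (Suc n) = measure_pmf.expectation (weight_distr p (Suc n)) (\<lambda>w. F n w + of_bool (bnew n w))"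
    unfolding exp_X_def
    by (intro Bochner_Integration.integral_cong refl) (use F_Suc[OF n] in \<open>simp add: F_def\<close>)
  also have "\<dots> = measure_pmf.expectation (weight_distr p n)
      (\<lambda>w. (1 - (1 - p) ^ R n w) * (F n w + 1) + (1 - p) ^ R n w * (F n w + 0))"
    using step[OF n p, where \<Phi> = "\<lambda>a k b. a + of_bool b"] by simp
  also have "\<dots> = measure_pmf.expectation (weight_distr p n) (\<lambda>w. F n w + (1 - (1 - p) ^ R n w))"
    by (intro Bochner_Integration.integral_cong refl) (simp add: algebra_simps)
  also have "\<dots> = exp_X p n + measure_pmf.expectation (weight_distr p n) (\<lambda>w. 1 - (1 - p) ^ R n w)"
    by (subst Bochner_Integration.integral_add) (auto intro: int_D simp: exp_X_def F_eq)
  finally show ?thesis .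
qed

lemma h1_Suc:
  assumes n: "1 \<le> n" and p: "0 \<le> p" "p \<le> 1"
  shows "hh p (Suc n) 1 = measure_pmf.expectation (weight_distr p n) (\<lambda>w. 1 - (1 - p) ^ R n w)"
proof -
  have Rne: "R n w \<noteq> 0" for w using R_range[OF n, of w] by simp
  have "hh p (Suc n) 1 = measure_pmf.expectation (weight_distr p (Suc n))
          (\<lambda>w. of_bool ((if bnew n w then 1 else Suc (R n w)) = 1))"
    unfolding hh_def using R_Suc[OF n] by simp
  also have "\<dots> = measure_pmf.expectation (weight_distr p n)
      (\<lambda>w. (1 - (1 - p) ^ R n w) * 1 + (1 - p) ^ R n w * of_bool (Suc (R n w) = 1))"
    using step[OF n p, where \<Phi> = "\<lambda>a k b. of_bool ((if b then 1 else Suc k) = (1::nat))"] by simp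
  also have "\<dots> = measure_pmf.expectation (weight_distr p n) (\<lambda>w. 1 - (1 - p) ^ R n w)"
    by (intro Bochner_Integration.integral_cong refl) (simp add: Rne)
  finally show ?thesis .
qed

lemma hS_Suc:
  assumes n: "1 \<le> n" and p: "0 \<le> p" "p \<le> 1" and k: "1 \<le> k"
  shows "hh p (Suc n) (Suc k) = (1 - p) ^ k * hh p n k"
proof -
  have "hh p (Suc n) (Suc k) = measure_pmf.expectation (weight_distr p (Suc n))
          (\<lambda>w. of_bool ((if bnew n w then 1 else Suc (R n w)) = Suc k))"
    unfolding hh_def using R_Suc[OF n] by simp
  also have "\<dots> = measure_pmf.expectation (weight_distr p n)
      (\<lambda>w. (1 - (1 - p) ^ R n w) * of_bool (1 = Suc k) + (1 - p) ^ R n w * of_bool (Suc (R n w) = Suc k))"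
    using step[OF n p, where \<Phi> = "\<lambda>a k' b. of_bool ((if b then 1 else Suc k') = Suc k)"] by simp
  also have "\<dots> = measure_pmf.expectation (weight_distr p n) (\<lambda>w. (1 - p) ^ k * of_bool (R n w = k))"
    using k by (intro Bochner_Integration.integral_cong refl) auto
  also have "\<dots> = (1 - p) ^ k * hh p n k"
    unfolding hh_def by simp
  finally show ?thesis .
qed

lemma sum_h:
  assumes n: "1 \<le> n"
  shows "measure_pmf.expectation (weight_distr p n) (\<lambda>w. 1 - (1 - p) ^ R n w) =
         (\<Sum>k=1..n. (1 - (1 - p) ^ k) * hh p n k)"
proof -
  have pw: "(\<Sum>k=1..n. (1 - (1 - p) ^ k) * of_bool (R n w = k)) = 1 - (1 - p) ^ R n w" for w
  proof -
    have "(\<Sum>k=1..n. (1 - (1 - p) ^ k) * of_bool (R n w = k)) =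
          (\<Sum>k=1..n. if k = R n w then 1 - (1 - p) ^ k else 0)"
      by (intro sum.cong) auto
    also have "\<dots> = 1 - (1 - p) ^ R n w" using R_range[OF n, of w] by (subst sum.delta) auto
    finally show ?thesis .
  qed
  have "(\<Sum>k=1..n. (1 - (1 - p) ^ k) * hh p n k) =
        measure_pmf.expectation (weight_distr p n) (\<lambda>w. \<Sum>k=1..n. (1 - (1 - p) ^ k) * of_bool (R n w = k))"
    unfolding hh_def
    by (subst Bochner_Integration.integral_sum) (auto intro: int_D)
  then show ?thesis using pw by simp
qed

lemma exp_X_1: "exp_X p 1 = 0"
proof -
  have "exp_X p 1 = measure_pmf.expectation (weight_distr p 1) (\<lambda>w. 0)"
    unfolding exp_X_def by (intro Bochner_Integration.integral_cong refl) (use F_1 in \<open>simp add: F_def\<close>)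
  then show ?thesis by simp
qed

lemma R_1: "R 1 w = 1"
proof -
  have "Lset 1 w = {1}" by (auto simp: Lset_def)
  then show ?thesis by (simp add: R_def)
qed

lemma hh_1: "hh p 1 k = of_bool (k = 1)"
  unfolding hh_def using R_1 by simp



definition u :: "real \<Rightarrow> nat \<Rightarrow> real" where
  "u p m = (if m = 0 then 0 else hh p m 1)"

lemma choose2_Suc: "Suc k choose 2 = k + (k choose 2)"
  by (simp add: numeral_2_eq_2)

lemma hh_formula:
  assumes p: "0 \<le> p" "p \<le> 1"
  shows "1 \<le> n \<Longrightarrow> 1 \<le> k \<Longrightarrow> k \<le> n \<Longrightarrow> hh p n k = u p (Suc n - k) * (1 - p) ^ (k choose 2)"
proof (induction n arbitrary: k)
  case 0
  then show ?case by simp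
next
  case (Suc m)
  show ?case
  proof (cases "k = 1")
    case True
    then show ?thesis by (simp add: u_def numeral_2_eq_2)
  next
    case False
    obtain k0 where k0e: "k = Suc k0" using Suc.prems by (cases k) auto
    then have k0: "k = Suc k0" "1 \<le> k0" "k0 \<le> m" using Suc.prems False by auto
    then have m: "1 \<le> m" by simp
    have "hh p (Suc m) k = (1 - p) ^ k0 * hh p m k0" using hS_Suc[OF m p k0(2)] k0(1) by simp
    also have "\<dots> = (1 - p) ^ k0 * (u p (Suc m - k0) * (1 - p) ^ (k0 choose 2))"
      using Suc.IH[OF m k0(2) k0(3)] by simp
    also have "\<dots> = u p (Suc (Suc m) - k) * (1 - p) ^ (k choose 2)"
      using k0(1) by (simp add: choose2_Suc power_add)
    finally show ?thesis .
  qed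
qed

lemma u_1: "u p 1 = 1"
  using hh_1[of p 1] by (simp add: u_def)

lemma u_rec:
  assumes p: "0 \<le> p" "p \<le> 1" and n: "1 \<le> n"
  shows "u p (Suc n) = (\<Sum>k=1..n. u p (Suc n - k) * ((1 - p) ^ (k choose 2) - (1 - p) ^ (Suc k choose 2)))"
proof -
  have "u p (Suc n) = (\<Sum>k=1..n. (1 - (1 - p) ^ k) * hh p n k)"
    unfolding u_def using h1_Suc[OF n p] sum_h[OF n] by simp
  also have "\<dots> = (\<Sum>k=1..n. u p (Suc n - k) * ((1 - p) ^ (k choose 2) - (1 - p) ^ (Suc k choose 2)))"
  proof (intro sum.cong refl)
    fix k assume "k \<in> {1..n}"
    then have "hh p n k = u p (Suc n - k) * (1 - p) ^ (k choose 2)" using hh_formula[OF p n] by simp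
    then show "(1 - (1 - p) ^ k) * hh p n k = u p (Suc n - k) * ((1 - p) ^ (k choose 2) - (1 - p) ^ (Suc k choose 2))"
      by (simp add: choose2_Suc power_add algebra_simps)
  qed
  finally show ?thesis .
qed

lemma g_sum:
  assumes p: "0 \<le> p" "p \<le> 1"
  shows "1 \<le> n \<Longrightarrow> g_seq p n = (\<Sum>m=1..n. u p m)"
proof (induction n)
  case 0
  then show ?case by simp
next
  case (Suc n)
  show ?case
  proof (cases "n = 0")
    case True
    then show ?thesis using exp_X_1[of p, unfolded One_nat_def] u_1[of p, unfolded One_nat_def] by (simp add: g_seq_def)
  next
    case False
    then have n: "1 \<le> n" by simp
    have "g_seq p (Suc n) = g_seq p n + u p (Suc n)"
      using E_Suc[OF n p] h1_Suc[OF n p] n by (simp add: g_seq_def u_def)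
    then show ?thesis using Suc.IH[OF n] by simp
  qed
qed

lemma fps1:
  assumes p: "0 \<le> p" "p \<le> 1"
  shows "(G_fps p - 1) * (1 - fps_X) = Abs_fps (u p)"
proof (rule fps_ext)
  fix n
  have "(G_fps p - 1) * (1 - fps_X) = (G_fps p - 1) - (G_fps p - 1) * fps_X" by (simp add: algebra_simps)
  then have e: "fps_nth ((G_fps p - 1) * (1 - fps_X)) n = fps_nth (G_fps p - 1) n - (if n = 0 then 0 else fps_nth (G_fps p - 1) (n - 1))"
    by simp
  show "fps_nth ((G_fps p - 1) * (1 - fps_X)) n = fps_nth (Abs_fps (u p)) n"
  proof (cases n)
    case 0
    then show ?thesis using e by (simp add: G_fps_def g_seq_def u_def)
  next
    case (Suc m)
    show ?thesis
    proof (cases m)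
      case 0
      then show ?thesis using e Suc g_sum[OF p, of 1] by (simp add: G_fps_def g_seq_def)
    next
      case (Suc m0)
      have a: "g_seq p (Suc m) = (\<Sum>j=1..Suc m. u p j)" using g_sum[OF p, of "Suc m"] by simp
      have b: "g_seq p m = (\<Sum>j=1..m. u p j)" using g_sum[OF p, of m] Suc by simp
      have "g_seq p (Suc m) - g_seq p m = u p (Suc m)" using a b by simp
      then show ?thesis using e \<open>n = Suc m\<close> Suc by (simp add: G_fps_def)
    qed
  qed
qed

lemma fps2:
  assumes p: "0 \<le> p" "p \<le> 1"
  shows "((1 - fps_X) * B_fps p) * Abs_fps (u p) = fps_X"
proof (rule fps_ext)
  fix n
  define Cb where "Cb = (1 - fps_X) * B_fps p"
  have Cb_eq: "(1 - fps_X) * B_fps p = B_fps p - fps_X * B_fps p" by (simp add: algebra_simps)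
  have Cb0: "fps_nth Cb 0 = 1" unfolding Cb_def Cb_eq by (simp add: B_fps_def numeral_2_eq_2)
  have CbS: "fps_nth Cb (Suc i) = (1 - p) ^ (Suc (Suc i) choose 2) - (1 - p) ^ (Suc i choose 2)" for i
    unfolding Cb_def Cb_eq by (simp add: B_fps_def)
  have "fps_nth (Cb * Abs_fps (u p)) n = fps_nth fps_X n"
  proof (cases n)
    case 0
    then show ?thesis by (simp add: fps_mult_nth u_def)
  next
    case (Suc m)
    have "fps_nth (Cb * Abs_fps (u p)) n = (\<Sum>i=0..Suc m. fps_nth Cb i * u p (Suc m - i))"
      using Suc by (simp add: fps_mult_nth)
    also have "\<dots> = fps_nth Cb 0 * u p (Suc m) + (\<Sum>i=Suc 0..Suc m. fps_nth Cb i * u p (Suc m - i))"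
      by (subst sum.atLeast_Suc_atMost) simp_all
    also have "(\<Sum>i=Suc 0..Suc m. fps_nth Cb i * u p (Suc m - i)) = (\<Sum>i=1..m. fps_nth Cb i * u p (Suc m - i))"
      by (simp add: u_def)
    also have "\<dots> = - (\<Sum>i=1..m. u p (Suc m - i) * ((1 - p) ^ (i choose 2) - (1 - p) ^ (Suc i choose 2)))"
      unfolding sum_negf[symmetric]
    proof (intro sum.cong refl)
      fix i assume "i \<in> {1..m}"
      then obtain i0 where i0: "i = Suc i0" by (cases i) auto
      have h: "fps_nth Cb i = (1 - p) ^ (Suc i choose 2) - (1 - p) ^ (i choose 2)"
        unfolding i0 by (rule CbS)
      show "fps_nth Cb i * u p (Suc m - i) = - (u p (Suc m - i) * ((1 - p) ^ (i choose 2) - (1 - p) ^ (Suc i choose 2)))"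
        unfolding h by (simp add: algebra_simps)
    qed
    finally have eq: "fps_nth (Cb * Abs_fps (u p)) n = u p (Suc m) -
        (\<Sum>i=1..m. u p (Suc m - i) * ((1 - p) ^ (i choose 2) - (1 - p) ^ (Suc i choose 2)))"
      using Cb0 by simp
    show ?thesis
    proof (cases "m = 0")
      case True
      then show ?thesis using eq Suc u_1[of p, unfolded One_nat_def] by simp
    next
      case False
      then have "1 \<le> m" by simp
      then show ?thesis using eq Suc u_rec[OF p, of m] by simp
    qed
  qed
  then show "fps_nth ((1 - fps_X) * B_fps p * Abs_fps (u p)) n = fps_nth fps_X n" by (simp add: Cb_def)
qed

theorem theorem2:
  fixes p :: real
  assumes "0 < p" and "p < 1"
  shows "G_fps p = 1 + fps_X * inverse ((1 - fps_X)\<^sup>2 * B_fps p)"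
proof -
  have p: "0 \<le> p" "p \<le> 1" using assms by auto
  define C where "C = (1 - fps_X)\<^sup>2 * B_fps p"
  have "(G_fps p - 1) * C = ((G_fps p - 1) * (1 - fps_X)) * ((1 - fps_X) * B_fps p)"
    unfolding C_def by (simp only: power2_eq_square mult.assoc)
  also have "\<dots> = Abs_fps (u p) * ((1 - fps_X) * B_fps p)" by (simp only: fps1[OF p])
  also have "\<dots> = fps_X" by (subst mult.commute) (rule fps2[OF p])
  finally have GC: "(G_fps p - 1) * C = fps_X" .
  have C0: "fps_nth C 0 \<noteq> 0" unfolding C_def by (simp add: B_fps_def fps_nth_power_0 numeral_2_eq_2)
  have CC: "C * inverse C = 1" by (rule inverse_mult_eq_1'[OF C0])
  have "G_fps p - 1 = (G_fps p - 1) * (C * inverse C)" by (simp only: CC mult_1_right)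
  also have "\<dots> = ((G_fps p - 1) * C) * inverse C" by (simp only: mult.assoc)
  also have "\<dots> = fps_X * inverse C" by (simp only: GC)
  finally have eq: "G_fps p - 1 = fps_X * inverse C" .
  have "G_fps p = 1 + (G_fps p - 1)" by simp
  also have "\<dots> = 1 + fps_X * inverse C" by (simp only: eq)
  finally show ?thesis unfolding C_def .
qed

end
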